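(* Let $W\in\mathbb{R}^{n\times m}$ with rows $w_1,\dots,w_n$, let $u\in\mathbb{R}^{1\times n}$, and let $a\le b$ be real numbers. Call a pair $(\Delta x,\Delta\sigma)\in\mathbb{R}^m\times\mathbb{R}^n$ admissible if $\Delta x\neq0$ and for every $i\in[n]$, $$\begin{pmatrix}w_i\Delta x\\ \Delta\sigma_i\end{pmatrix}^T\begin{pmatrix}-2ab& a+b\\ a+b&-2\end{pmatrix}\begin{pmatrix}w_i\Delta x\\ \Delta\sigma_i\end{pmatrix}\ge 0 .$$ Then $$\sup_{(\Delta x,\Delta\sigma)\ \text{admissible}}\frac{(u\Delta\sigma)^2}{\langle\Delta x,\Delta x\rangle}=\max_{y\in[a,b]^n}\big\|W^T\mathrm{diag}(y)u^T\big\|_2^2 .$$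
   Context: $\mathrm{diag}(y)$ is the diagonal matrix with diagonal $y$. The constraint on $(w_i\Delta x,\Delta\sigma_i)$ is equivalent to $(\Delta\sigma_i-a\,w_i\Delta x)(\Delta\sigma_i-b\,w_i\Delta x)\le0$, i.e. it encodes that the $i$-th activation has slope in $[a,b]$. *)

theory Defs
  imports "HOL-Analysis.Analysis"
begin

text \<open>Rows of W are indexed by 'n; W :: real^'m^'n, so (W *v dx)$i = w_i dx.\<close>

definition admissible ::
  "real \<Rightarrow> real \<Rightarrow> real^'m^'n \<Rightarrow> real^'m \<Rightarrow> real^'n \<Rightarrow> bool" where
  "admissible a b W dx ds \<longleftrightarrow> dx \<noteq> 0 \<and>
     (\<forall>i. (let p = (W *v dx) $ i; q = ds $ i in
        p * (-2*a*b * p + (a+b) * q) + q * ((a+b) * p + (-2) * q) \<ge> 0))"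

definition diag_mul :: "real^'n \<Rightarrow> real^'n \<Rightarrow> real^'n" where
  "diag_mul y u = (\<chi> i. y $ i * u $ i)"

definition box_ab :: "real \<Rightarrow> real \<Rightarrow> (real^'n) set" where
  "box_ab a b = {y. \<forall>i. a \<le> y $ i \<and> y $ i \<le> b}"

end

theory Submission
  imports Defs
begin

lemma adm_comp:
  fixes a b p q :: real
  assumes ab: "a \<le> b" and h: "p * (-2*a*b * p + (a+b) * q) + q * ((a+b) * p + (-2) * q) \<ge> 0"
  shows "\<exists>y. a \<le> y \<and> y \<le> b \<and> q = y * p"
proof -
  have e: "(q - a*p) * (q - b*p) \<le> 0" using h by (simp add: algebra_simps)
  show ?thesis
  proof (cases "p = 0")
    case True
    then have "q * q \<le> 0" using e by simp
    then have "q = 0" by (auto simp add: mult_le_0_iff)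
    then show ?thesis using True ab by auto
  next
    case False
    define t where "t = q / p"
    have q: "q = t * p" using False by (simp add: t_def)
    have "(q - a*p) * (q - b*p) = p^2 * ((t - a) * (t - b))"
      unfolding q by (simp add: algebra_simps power2_eq_square)
    with e have "p^2 * ((t - a) * (t - b)) \<le> 0" by simp
    moreover have "p^2 > 0" using False by simp
    ultimately have "(t - a) * (t - b) \<le> 0" by (simp add: mult_le_0_iff)
    then have "a \<le> t \<and> t \<le> b" using ab
      by (auto simp: mult_le_0_iff)
    then show ?thesis using q by auto
  qed
qed

lemma transp_inner:
  fixes W :: "real^'m^'n"
  shows "(transpose W *v z) \<bullet> dx = z \<bullet> (W *v dx)"
proof -
  have "transpose W *v z = z v* W"
    using vector_transpose_matrix[of z "transpose W"] by simp
  then show ?thesis by (simp add: dot_lmul_matrix)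
qed

lemma diag_inner: "diag_mul y u \<bullet> v = (\<Sum>i\<in>UNIV. u $ i * (y $ i * v $ i))"
  by (simp add: diag_mul_def inner_vec_def algebra_simps)

theorem mainTheorem7:
  fixes W :: "real^'m^'n" and u :: "real^'n" and a b :: real
  assumes "a \<le> b"
  shows "\<exists>y0 \<in> box_ab a b.
           (\<forall>y \<in> box_ab a b. (norm (transpose W *v diag_mul y u))^2
                              \<le> (norm (transpose W *v diag_mul y0 u))^2) \<and>
           (SUP p \<in> {(dx, ds). admissible a b W dx ds}.
              ereal ((u \<bullet> snd p)^2 / (fst p \<bullet> fst p)))
           = ereal ((norm (transpose W *v diag_mul y0 u))^2)"
proof -
  define f where "f y = (norm (transpose W *v diag_mul y u))^2" for y
  have box: "box_ab a b = cbox (vec a) (vec b)"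
    by (auto simp: box_ab_def mem_box_cart)
  have "vec a \<in> box_ab a b" using assms by (simp add: box_ab_def)
  then have ne: "box_ab a b \<noteq> {}" by blast
  have cont: "continuous_on (box_ab a b) f"
    unfolding f_def diag_mul_def
    by (intro continuous_intros linear_continuous_on matrix_vector_mul_bounded_linear
          continuous_on_compose2[OF linear_continuous_on[OF matrix_vector_mul_bounded_linear]]) auto
  obtain y0 where y0: "y0 \<in> box_ab a b" and mx: "\<And>y. y \<in> box_ab a b \<Longrightarrow> f y \<le> f y0"
    using continuous_attains_sup[OF _ ne cont] box compact_cbox by metis
  define v where "v = transpose W *v diag_mul y0 u"
  have upper: "(u \<bullet> ds)^2 / (dx \<bullet> dx) \<le> f y0" if adm: "admissible a b W dx ds" for dx ds
  proof -
    have dx0: "dx \<noteq> 0" using adm by (simp add: admissible_def)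
    have "\<forall>i. \<exists>y. a \<le> y \<and> y \<le> b \<and> ds $ i = y * (W *v dx) $ i"
      using adm assms adm_comp unfolding admissible_def Let_def by blast
    from choice[OF this] obtain yf where yf0: "\<forall>i. a \<le> yf i \<and> yf i \<le> b \<and> ds $ i = yf i * (W *v dx) $ i"
      by blast
    then have yf: "\<And>i. a \<le> yf i \<and> yf i \<le> b \<and> ds $ i = yf i * (W *v dx) $ i" by blast
    define y where "y = (\<chi> i. yf i)"
    have yb: "y \<in> box_ab a b" using yf by (simp add: y_def box_ab_def)
    have "u \<bullet> ds = diag_mul y u \<bullet> (W *v dx)"
      unfolding diag_inner by (simp add: inner_vec_def y_def yf)
    also have "\<dots> = (transpose W *v diag_mul y u) \<bullet> dx" by (rule transp_inner[symmetric])
    finally have e: "u \<bullet> ds = (transpose W *v diag_mul y u) \<bullet> dx" .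
    have "\<bar>u \<bullet> ds\<bar> \<le> norm (transpose W *v diag_mul y u) * norm dx"
      unfolding e by (rule Cauchy_Schwarz_ineq2)
    then have "\<bar>u \<bullet> ds\<bar>^2 \<le> (norm (transpose W *v diag_mul y u) * norm dx)^2"
      by (rule power_mono) simp
    then have "(u \<bullet> ds)^2 \<le> (norm (transpose W *v diag_mul y u) * norm dx)^2"
      by simp
    then have "(u \<bullet> ds)^2 \<le> f y * (dx \<bullet> dx)"
      by (simp add: f_def power_mult_distrib power2_norm_eq_inner[symmetric])
    moreover have "dx \<bullet> dx > 0" using dx0 by simp
    ultimately have "(u \<bullet> ds)^2 / (dx \<bullet> dx) \<le> f y" by (simp add: divide_le_eq)
    also have "\<dots> \<le> f y0" using mx yb by blast
    finally show ?thesis .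
  qed
  have one0: "(1::real^'m) \<noteq> 0" by (metis one_index zero_index zero_neq_one)
  define dx :: "real^'m" where "dx = (if v = 0 then 1 else v)"
  have dx0: "dx \<noteq> 0" and dxv: "v \<noteq> 0 \<Longrightarrow> dx = v" using one0 by (auto simp: dx_def)
  define ds where "ds = diag_mul y0 (W *v dx)"
  have adm: "admissible a b W dx ds"
  proof -
    { fix i
      have "a \<le> y0 $ i" "y0 $ i \<le> b" using y0 by (auto simp: box_ab_def)
      then have le: "((W *v dx) $ i)^2 * ((y0 $ i - a) * (y0 $ i - b)) \<le> 0"
        by (intro mult_nonneg_nonpos) (auto simp: mult_le_0_iff)
      have "(ds $ i - a * (W *v dx) $ i) * (ds $ i - b * (W *v dx) $ i)
            = ((W *v dx) $ i)^2 * ((y0 $ i - a) * (y0 $ i - b))"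
        by (simp add: ds_def diag_mul_def algebra_simps power2_eq_square)
      with le have "(ds $ i - a * (W *v dx) $ i) * (ds $ i - b * (W *v dx) $ i) \<le> 0" by simp
      then have "(W *v dx) $ i * (-2*a*b * (W *v dx) $ i + (a+b) * ds $ i) + ds $ i * ((a+b) * (W *v dx) $ i + (-2) * ds $ i) \<ge> 0"
        by (simp add: algebra_simps) }
    then show ?thesis using dx0 by (simp add: admissible_def Let_def)
  qed
  have "u \<bullet> ds = diag_mul y0 u \<bullet> (W *v dx)"
    unfolding diag_inner by (simp add: inner_vec_def ds_def diag_mul_def algebra_simps)
  also have "\<dots> = v \<bullet> dx" unfolding v_def by (rule transp_inner[symmetric])
  finally have uds: "u \<bullet> ds = v \<bullet> dx" .
  have fv: "f y0 = (norm v)^2" by (simp only: f_def v_def)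
  have attain: "(u \<bullet> ds)^2 / (dx \<bullet> dx) = f y0"
  proof (cases "v = 0")
    case True
    then show ?thesis using uds fv by simp
  next
    case False
    then have "dx = v" using dxv by simp
    then show ?thesis using uds False fv
      by (simp add: power2_norm_eq_inner[symmetric] power2_eq_square)
  qed
  have "(SUP p \<in> {(dx, ds). admissible a b W dx ds}.
              ereal ((u \<bullet> snd p)^2 / (fst p \<bullet> fst p))) = ereal (f y0)"
  proof (rule antisym)
    show "(SUP p \<in> {(dx, ds). admissible a b W dx ds}.
              ereal ((u \<bullet> snd p)^2 / (fst p \<bullet> fst p))) \<le> ereal (f y0)"
      by (rule SUP_least) (auto intro: upper)
    have "ereal ((u \<bullet> snd (dx,ds))^2 / (fst (dx,ds) \<bullet> fst (dx,ds))) \<le>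
          (SUP p \<in> {(dx, ds). admissible a b W dx ds}.
              ereal ((u \<bullet> snd p)^2 / (fst p \<bullet> fst p)))"
      by (rule SUP_upper) (use adm in auto)
    then show "ereal (f y0) \<le> (SUP p \<in> {(dx, ds). admissible a b W dx ds}.
              ereal ((u \<bullet> snd p)^2 / (fst p \<bullet> fst p)))"
      using attain by simp
  qed
  then show ?thesis using y0 mx unfolding f_def by blast
qed

end
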